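(* Every involutive Jamesian function is continuous on $[0,1]^2\setminus\{(0,0),(1,1)\}$.
   Context: Let $D=[0,1]^2\setminus\{(0,0),(1,1)\}$. A function $J\colon D\to\mathbb{R}$ is called Jamesian if it satisfies, for all $(a,b)\in D$: (a) $J(a,\tfrac12)=a$; (b) $J(a,0)=1$ for $0<a\le 1$; (c) $J(b,a)=1-J(a,b)$; (d) $J(1-b,1-a)=J(a,b)$; (e) $J(a,b)$ is a non-decreasing function of $a$ for each $0\le b\le 1$ and a strictly increasing function of $a$ for each $0<b<1$. A Jamesian function is called involutive if in addition $J(a,J(a,b))=b$ whenever $0<a<1$ and $0\le b\le 1$. *)

theory Defs
  imports "HOL-Analysis.Analysis"
begin

definition jdom :: "(real \<times> real) set" where
  "jdom = ({0..1} \<times> {0..1}) - {(0,0),(1,1)}"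

definition jamesian :: "(real \<Rightarrow> real \<Rightarrow> real) \<Rightarrow> bool" where
  "jamesian J \<longleftrightarrow>
     (\<forall>a b. (a,b) \<in> jdom \<longrightarrow>
        J a (1/2) = a
      \<and> (0 < a \<and> a \<le> 1 \<longrightarrow> J a 0 = 1)
      \<and> J b a = 1 - J a b
      \<and> J (1 - b) (1 - a) = J a b)
   \<and> (\<forall>b\<in>{0..1}. mono_on {a. (a,b) \<in> jdom} (\<lambda>a. J a b))
   \<and> (\<forall>b\<in>{0<..<1}. strict_mono_on {a. (a,b) \<in> jdom} (\<lambda>a. J a b))"

definition involutive_jamesian :: "(real \<Rightarrow> real \<Rightarrow> real) \<Rightarrow> bool" where
  "involutive_jamesian J \<longleftrightarrow> jamesian J \<and>
     (\<forall>a b. 0 < a \<and> a < 1 \<and> 0 \<le> b \<and> b \<le> 1 \<longrightarrow> J a (J a b) = b)"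

end

theory Submission
  imports Defs
begin

lemma jdom_iff: "(a,b) \<in> jdom \<longleftrightarrow> 0\<le>a \<and> a\<le>1 \<and> 0\<le>b \<and> b\<le>1 \<and> \<not>(a=0\<and>b=0) \<and> \<not>(a=1\<and>b=1)"
  by (auto simp: jdom_def)

context
  fixes J :: "real \<Rightarrow> real \<Rightarrow> real"
  assumes jam: "jamesian J"
begin

lemma Jsym: "(a,b)\<in>jdom \<Longrightarrow> J b a = 1 - J a b"
  using jam unfolding jamesian_def by blast

lemma Jrefl: "(a,b)\<in>jdom \<Longrightarrow> J (1-b) (1-a) = J a b"
  using jam unfolding jamesian_def by blast

lemma Ja0: "0<a \<Longrightarrow> a\<le>1 \<Longrightarrow> J a 0 = 1"
proof -
  assume h: "0<a" "a\<le>1"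
  have "(a,1/2)\<in>jdom" using h by (simp add: jdom_iff)
  then show ?thesis using jam h unfolding jamesian_def by blast
qed

lemma Jmono: "0\<le>b \<Longrightarrow> b\<le>1 \<Longrightarrow> (x,b)\<in>jdom \<Longrightarrow> (y,b)\<in>jdom \<Longrightarrow> x\<le>y \<Longrightarrow> J x b \<le> J y b"
proof -
  assume h: "0\<le>b" "b\<le>1" "(x,b)\<in>jdom" "(y,b)\<in>jdom" "x\<le>y"
  have "mono_on {a. (a,b)\<in>jdom} (\<lambda>a. J a b)" using jam h unfolding jamesian_def by auto
  then show ?thesis using h by (auto dest: mono_onD)
qed

lemma Jsmono: "0<b \<Longrightarrow> b<1 \<Longrightarrow> (x,b)\<in>jdom \<Longrightarrow> (y,b)\<in>jdom \<Longrightarrow> x<y \<Longrightarrow> J x b < J y b"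
proof -
  assume h: "0<b" "b<1" "(x,b)\<in>jdom" "(y,b)\<in>jdom" "x<y"
  have "strict_mono_on {a. (a,b)\<in>jdom} (\<lambda>a. J a b)" using jam h unfolding jamesian_def by auto
  then show ?thesis using h by (auto dest: strict_mono_onD)
qed

lemma J0b: "0<b \<Longrightarrow> b\<le>1 \<Longrightarrow> J 0 b = 0"
  using Jsym[of b 0] Ja0[of b] by (simp add: jdom_iff)

lemma J1b: "0\<le>b \<Longrightarrow> b<1 \<Longrightarrow> J 1 b = 1"
  using Jrefl[of "1-b" 0] Ja0[of "1-b"] by (simp add: jdom_iff)

lemma Ja1: "0\<le>a \<Longrightarrow> a<1 \<Longrightarrow> J a 1 = 0"
  using Jsym[of 1 a] J1b[of a] by (simp add: jdom_iff)

lemma Jle1: "(a,b)\<in>jdom \<Longrightarrow> J a b \<le> 1"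
proof -
  assume h: "(a,b)\<in>jdom"
  show ?thesis
  proof (cases "b = 1")
    case True then show ?thesis using h Ja1[of a] by (auto simp: jdom_iff)
  next
    case False
    then have "J a b \<le> J 1 b" using h by (intro Jmono) (auto simp: jdom_iff)
    then show ?thesis using J1b[of b] h False by (auto simp: jdom_iff)
  qed
qed

lemma Jdec: "0<a \<Longrightarrow> a<1 \<Longrightarrow> 0\<le>x \<Longrightarrow> x<y \<Longrightarrow> y\<le>1 \<Longrightarrow> J a y < J a x"
proof -
  assume h: "0<a" "a<1" "0\<le>x" "x<y" "y\<le>1"
  have "J x a < J y a" using h by (intro Jsmono) (auto simp: jdom_iff)
  moreover have "(x,a)\<in>jdom" "(y,a)\<in>jdom" using h by (auto simp: jdom_iff)
  then have "J a x = 1 - J x a" "J a y = 1 - J y a" using Jsym[of x a] Jsym[of y a] by auto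
  ultimately show ?thesis by simp
qed

lemma Jantimono: "(a,x)\<in>jdom \<Longrightarrow> (a,y)\<in>jdom \<Longrightarrow> x\<le>y \<Longrightarrow> J a y \<le> J a x"
proof -
  assume h: "(a,x)\<in>jdom" "(a,y)\<in>jdom" "x\<le>y"
  have "J x a \<le> J y a" using h by (intro Jmono) (auto simp: jdom_iff)
  moreover have "J x a = 1 - J a x" "J y a = 1 - J a y" using h Jsym[of a x] Jsym[of a y] by auto
  ultimately show ?thesis by simp
qed

end

context
  fixes J :: "real \<Rightarrow> real \<Rightarrow> real"
  assumes inv: "involutive_jamesian J"
begin

lemma jam: "jamesian J" using inv by (simp add: involutive_jamesian_def)

lemma Jinv: "0<a \<Longrightarrow> a<1 \<Longrightarrow> 0\<le>b \<Longrightarrow> b\<le>1 \<Longrightarrow> J a (J a b) = b"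
  using inv by (simp add: involutive_jamesian_def)

lemma left_cont:
  assumes "0\<le>a0" "a0<1" "0<b0" "b0\<le>1" "e>0"
  shows "\<exists>b1. 0<b1 \<and> b1<b0 \<and> J a0 b1 < J a0 b0 + e"
proof (cases "a0 = 0")
  case True
  then show ?thesis using J0b[OF jam] assms by (intro exI[of _ "b0/2"]) auto
next
  case False
  then have a: "0<a0" using assms by simp
  define y where "y = J a0 b0"
  have y1: "y < 1" using Jdec[OF jam a assms(2), of 0 b0] Ja0[OF jam a] assms y_def by simp
  have y0: "0 \<le> y" using Ja1[OF jam, of a0] Jantimono[OF jam, of a0 b0 1] assms a y_def
    by (auto simp: jdom_iff)
  define c where "c = (y + min (y+e/2) 1)/2"
  have c: "y < c" "c < 1" "c < y + e" using y1 y0 assms(5) by (auto simp: c_def min_def)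
  define b1 where "b1 = J a0 c"
  have fb1: "J a0 b1 = c" unfolding b1_def using Jinv[OF a assms(2), of c] c y0 by simp
  have "b1 < b0"
  proof -
    have "J a0 c < J a0 y" using Jdec[OF jam a assms(2), of y c] c y0 by simp
    also have "J a0 y = b0" using Jinv[OF a assms(2), of b0] assms y_def by simp
    finally show ?thesis by (simp add: b1_def)
  qed
  moreover have "0 < b1"
  proof -
    have "J a0 1 < J a0 c" using Jdec[OF jam a assms(2), of c 1] c y0 by simp
    then show ?thesis using Ja1[OF jam, of a0] a assms by (simp add: b1_def)
  qed
  ultimately show ?thesis using fb1 c y_def by auto
qed

lemma right_cont:
  assumes "0\<le>a0" "a0<1" "0<b1" "b1<1" "e>0"
  shows "\<exists>a2. a0<a2 \<and> a2<1 \<and> J a2 b1 < J a0 b1 + e"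
proof -
  define z where "z = J b1 a0"
  have z0: "0 < z" using Jdec[OF jam assms(3) assms(4), of a0 1] Ja1[OF jam, of b1] assms z_def by simp
  have z1: "z \<le> 1" using Jle1[OF jam, of b1 a0] assms z_def by (simp add: jdom_iff)
  define c where "c = (z + max (z-e/2) 0)/2"
  have c: "0 < c" "c < z" "z - e < c" using z0 assms(5) by (auto simp: c_def max_def)
  define a2 where "a2 = J b1 c"
  have fa2: "J b1 a2 = c" unfolding a2_def using Jinv[OF assms(3) assms(4), of c] c z1 by simp
  have "a0 < a2"
  proof -
    have "J b1 z < J b1 c" using Jdec[OF jam assms(3) assms(4), of c z] c z1 by simp
    also have "J b1 z = a0" using Jinv[OF assms(3) assms(4), of a0] assms z_def by simp
    finally show ?thesis by (simp add: a2_def)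
  qed
  moreover have "a2 < 1"
  proof -
    have "J b1 c < J b1 0" using Jdec[OF jam assms(3) assms(4), of 0 c] c z1 by simp
    then show ?thesis using Ja0[OF jam, of b1] assms by (simp add: a2_def)
  qed
  moreover have "J a2 b1 = 1 - c" "J a0 b1 = 1 - z"
    using Jsym[OF jam, of b1 a2] Jsym[OF jam, of b1 a0] fa2 z_def assms \<open>a0<a2\<close> \<open>a2<1\<close>
    by (auto simp: jdom_iff)
  ultimately show ?thesis using c by (intro exI[of _ a2]) auto
qed

lemma upper:
  assumes "(a0,b0)\<in>jdom" "e>0"
  shows "\<exists>d>0. \<forall>a b. (a,b)\<in>jdom \<and> \<bar>a-a0\<bar><d \<and> \<bar>b-b0\<bar><d \<longrightarrow> J a b < J a0 b0 + e"
proof (cases "a0 = 1 \<or> b0 = 0")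
  case True
  have j1: "J a0 b0 = 1"
  proof (cases "a0 = 1")
    case True
    then have "b0 < 1" using assms by (auto simp: jdom_iff)
    then show ?thesis using True J1b[OF jam, of b0] assms by (simp add: jdom_iff)
  next
    case False
    then have "b0 = 0" "0 < a0" "a0 \<le> 1" using \<open>a0 = 1 \<or> b0 = 0\<close> assms by (auto simp: jdom_iff)
    then show ?thesis using Ja0[OF jam, of a0] by simp
  qed
  show ?thesis
  proof (intro exI[of _ 1] conjI allI impI)
    fix a b assume "(a,b)\<in>jdom \<and> \<bar>a-a0\<bar><1 \<and> \<bar>b-b0\<bar><1"
    then have "J a b \<le> 1" using Jle1[OF jam, of a b] by blast
    then show "J a b < J a0 b0 + e" using j1 assms(2) by simp
  qed simp
next
  case False
  then have h: "0\<le>a0" "a0<1" "0<b0" "b0\<le>1" using assms by (auto simp: jdom_iff)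
  obtain b1 where b1: "0<b1" "b1<b0" "J a0 b1 < J a0 b0 + e/2" using left_cont[OF h, of "e/2"] assms by auto
  have b1': "b1 < 1" using b1 h by simp
  obtain a2 where a2: "a0<a2" "a2<1" "J a2 b1 < J a0 b1 + e/2"
    using right_cont[OF h(1,2) b1(1) b1', of "e/2"] assms(2) by auto
  show ?thesis
  proof (intro exI[of _ "min (a2-a0) (b0-b1)"] conjI allI impI)
    show "0 < min (a2-a0) (b0-b1)" using a2 b1 by simp
    fix a b assume ab: "(a,b)\<in>jdom \<and> \<bar>a-a0\<bar> < min (a2-a0) (b0-b1) \<and> \<bar>b-b0\<bar> < min (a2-a0) (b0-b1)"
    then have ab1: "(a,b)\<in>jdom" and aa: "a < a2" and bb: "b1 < b" by (auto simp: abs_less_iff)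
    have bin: "0\<le>b" "b\<le>1" using ab1 by (auto simp: jdom_iff)
    have a2b: "(a2,b)\<in>jdom" using bin a2 h by (auto simp: jdom_iff)
    have a2b1: "(a2,b1)\<in>jdom" using b1' b1 a2 h by (auto simp: jdom_iff)
    have "J a b \<le> J a2 b" using Jmono[OF jam bin ab1 a2b] aa by simp
    also have "\<dots> \<le> J a2 b1" using Jantimono[OF jam a2b1 a2b] bb by simp
    finally show "J a b < J a0 b0 + e" using a2 b1 by simp
  qed
qed

end

theorem proposition5p2:
  fixes J :: "real \<Rightarrow> real \<Rightarrow> real"
  assumes "involutive_jamesian J"
  shows "continuous_on jdom (\<lambda>(a, b). J a b)"
  unfolding continuous_on_iff
proof (intro ballI allI impI)
  fix x e assume x: "x \<in> jdom" and e: "(0::real) < e"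
  obtain a0 b0 where xe: "x = (a0,b0)" by (cases x)
  have x': "(a0,b0)\<in>jdom" "(b0,a0)\<in>jdom" using x xe by (auto simp: jdom_iff)
  obtain d1 where d1: "d1>0" "\<forall>a b. (a,b)\<in>jdom \<and> \<bar>a-a0\<bar><d1 \<and> \<bar>b-b0\<bar><d1 \<longrightarrow> J a b < J a0 b0 + e"
    using upper[OF assms x'(1) e] by blast
  obtain d2 where d2: "d2>0" "\<forall>a b. (a,b)\<in>jdom \<and> \<bar>a-b0\<bar><d2 \<and> \<bar>b-a0\<bar><d2 \<longrightarrow> J a b < J b0 a0 + e"
    using upper[OF assms x'(2) e] by blast
  show "\<exists>d>0. \<forall>x'\<in>jdom. dist x' x < d \<longrightarrow> dist ((\<lambda>(a, b). J a b) x') ((\<lambda>(a, b). J a b) x) < e"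
  proof (intro exI[of _ "min d1 d2"] conjI ballI impI)
    show "0 < min d1 d2" using d1 d2 by simp
    fix y assume y: "y \<in> jdom" "dist y x < min d1 d2"
    obtain a b where yab: "y = (a,b)" by (cases y)
    have da: "\<bar>a-a0\<bar> \<le> dist y x" and db: "\<bar>b-b0\<bar> \<le> dist y x"
      unfolding yab xe dist_Pair_Pair dist_real_def
      by (auto intro: real_sqrt_ge_abs1 real_sqrt_ge_abs2 order_trans[OF _ real_sqrt_ge_abs1])
    have yj: "(a,b)\<in>jdom" "(b,a)\<in>jdom" using y yab by (auto simp: jdom_iff)
    have 1: "J a b < J a0 b0 + e" using d1(2) yj da db y by auto
    have 2: "J b a < J b0 a0 + e" using d2(2) yj da db y by auto
    have "J b a = 1 - J a b" "J b0 a0 = 1 - J a0 b0"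
      using Jsym[OF jam[OF assms] yj(1)] Jsym[OF jam[OF assms] x'(1)] by auto
    then show "dist ((\<lambda>(a, b). J a b) y) ((\<lambda>(a, b). J a b) x) < e"
      using 1 2 unfolding yab xe dist_real_def by auto
  qed
qed

end
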